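(* Let $C$ be a column of type $B$ or of type $D$ which can be split. Then $C$ is admissible.
   Context: Fix $n\ge2$. $\mathcal B_n$ is the totally ordered alphabet $1\prec\cdots\prec n\prec0\prec\bar n\prec\cdots\prec\bar1$; $\mathcal D_n$ is the partially ordered alphabet $1\prec\cdots\prec n-1\prec n,\bar n\prec\overline{n-1}\prec\cdots\prec\bar1$ with $n,\bar n$ incomparable; $\bar{\bar k}=k$, $\bar 0=0$; a letter $x$ is unbarred if $x\preceq n$. A column of type $B$ is a vertical sequence $x_1,\dots,x_l$ of letters of $\mathcal B_n$ (read top to bottom; reading $\mathrm w(C)=x_1\cdots x_l$, height $h(C)=l$) which is strictly increasing except that the letter $0$ may be repeated. A column of type $D$ is a sequence $x_1,\dots,x_l$ of letters of $\mathcal D_n$ with $x_{i+1}\not\preceq x_i$ for all $i$. $C$ contains the pair $(z,\bar z)$ if $C$ contains a $0$ (for $z=0$) or both letters $z\preceq n$ and $\bar z$. $C$ is admissible if $h(C)\le n$ and for every pair $z=x_p$, $\bar z=x_q$ with $z\preceq n$ one has $|q-p|\ge h(C)-z+1$. Splitting, type $B$: let $I_C=\{z_1\succeq z_2\succeq\cdots\succeq z_s\}$ be the multiset consisting of $r$ copies of $0$ ($r$ = number of $0$'s in $C$) followed by the unbarred letters $z_{r+1}\succ\cdots\succ z_s$ such that $(z,\bar z)$ occurs in $C$. $C$ can be split if there exist unbarred letters $t_1\succ\cdots\succ t_s$ such that $t_1$ is the greatest letter with $t_1\prec z_1$, $t_1\notin C$, $\bar t_1\notin C$, and for $i\ge2$,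 $t_i$ is the greatest letter with $t_i\prec\min(t_{i-1},z_i)$, $t_i\notin C$, $\bar t_i\notin C$. Then $rC$ is obtained from $C$ by replacing $\bar z_i$ by $\bar t_i$ for each $i$ (for $z_i=0$ a letter $0$ is replaced) and reordering, and $lC$ by replacing $z_i$ by $t_i$ for each $i$ and reordering. Type $D$: $\widehat C$ is the column of type $B$ obtained from $C$ by replacing each factor $\bar n\,n$ by $00$; $C$ can be split if $\widehat C$ can, and then $lC=l\widehat C$, $rC=r\widehat C$. *)

theory Defs
  imports Main
begin

datatype letter = Unb nat | Zero | Bar nat

fun bar :: "letter \<Rightarrow> letter" where
  "bar (Unb k) = Bar k"
| "bar Zero = Zero"
| "bar (Bar k) = Unb k"

fun letterB :: "nat \<Rightarrow> letter \<Rightarrow> bool" where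
  "letterB n (Unb k) = (1 \<le> k \<and> k \<le> n)"
| "letterB n Zero = True"
| "letterB n (Bar k) = (1 \<le> k \<and> k \<le> n)"

fun letterD :: "nat \<Rightarrow> letter \<Rightarrow> bool" where
  "letterD n (Unb k) = (1 \<le> k \<and> k \<le> n)"
| "letterD n Zero = False"
| "letterD n (Bar k) = (1 \<le> k \<and> k \<le> n)"

text \<open>Position in the chain 1 < ... < n < 0 < bar n < ... < bar 1.\<close>
fun rankB :: "nat \<Rightarrow> letter \<Rightarrow> nat" where
  "rankB n (Unb k) = k"
| "rankB n Zero = n + 1"
| "rankB n (Bar k) = 2 * n + 2 - k"

definition precB :: "nat \<Rightarrow> letter \<Rightarrow> letter \<Rightarrow> bool" where
  "precB n x y \<longleftrightarrow> rankB n x < rankB n y"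

definition minB :: "nat \<Rightarrow> letter \<Rightarrow> letter \<Rightarrow> letter" where
  "minB n x y = (if precB n x y then x else y)"

definition precD :: "nat \<Rightarrow> letter \<Rightarrow> letter \<Rightarrow> bool" where
  "precD n x y \<longleftrightarrow> rankB n x < rankB n y \<and> \<not> (x = Unb n \<and> y = Bar n)"

definition preceqD :: "nat \<Rightarrow> letter \<Rightarrow> letter \<Rightarrow> bool" where
  "preceqD n x y \<longleftrightarrow> x = y \<or> precD n x y"

text \<open>Columns (read top to bottom as lists).\<close>
definition column_B :: "nat \<Rightarrow> letter list \<Rightarrow> bool" where
  "column_B n C \<longleftrightarrow> (\<forall>x\<in>set C. letterB n x) \<and>
     (\<forall>i. Suc i < length C \<longrightarrow>
        precB n (C ! i) (C ! Suc i) \<or> (C ! i = Zero \<and> C ! Suc i = Zero))"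

definition column_D :: "nat \<Rightarrow> letter list \<Rightarrow> bool" where
  "column_D n C \<longleftrightarrow> (\<forall>x\<in>set C. letterD n x) \<and>
     (\<forall>i. Suc i < length C \<longrightarrow> \<not> preceqD n (C ! Suc i) (C ! i))"

definition admissible :: "nat \<Rightarrow> letter list \<Rightarrow> bool" where
  "admissible n C \<longleftrightarrow> length C \<le> n \<and>
     (\<forall>p q z. p < length C \<longrightarrow> q < length C \<longrightarrow> C ! p = Unb z \<longrightarrow> C ! q = Bar z \<longrightarrow>
        \<bar>int q - int p\<bar> \<ge> int (length C) - int z + 1)"

text \<open>The multiset I_C, listed as z_1 \<succeq> z_2 \<succeq> ... \<succeq> z_s.\<close>
definition I_C :: "letter list \<Rightarrow> letter list" where
  "I_C C = replicate (count_list C Zero) Zero @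
     map Unb (rev (sorted_list_of_set {z. Unb z \<in> set C \<and> Bar z \<in> set C}))"

text \<open>Candidates for t_i, given an upper bound b (t \<prec> b).\<close>
definition cand :: "nat \<Rightarrow> letter list \<Rightarrow> letter \<Rightarrow> letter \<Rightarrow> bool" where
  "cand n C b t \<longleftrightarrow> letterB n t \<and> precB n t b \<and> t \<notin> set C \<and> bar t \<notin> set C"

definition greatest_cand :: "nat \<Rightarrow> letter list \<Rightarrow> letter \<Rightarrow> letter \<Rightarrow> bool" where
  "greatest_cand n C b t \<longleftrightarrow> cand n C b t \<and> (\<forall>u. cand n C b u \<longrightarrow> \<not> precB n t u)"

definition unbarred :: "letter \<Rightarrow> bool" where
  "unbarred x \<longleftrightarrow> (\<exists>k. x = Unb k)"

definition can_split_B :: "nat \<Rightarrow> letter list \<Rightarrow> bool" where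
  "can_split_B n C \<longleftrightarrow> column_B n C \<and>
     (let z = I_C C in
      \<exists>t. length t = length z \<and> (\<forall>i<length t. unbarred (t ! i)) \<and>
        (\<forall>i. Suc i < length t \<longrightarrow> precB n (t ! Suc i) (t ! i)) \<and>
        (length z > 0 \<longrightarrow> greatest_cand n C (z ! 0) (t ! 0)) \<and>
        (\<forall>i. Suc i < length z \<longrightarrow>
           greatest_cand n C (minB n (t ! i) (z ! Suc i)) (t ! Suc i)))"

fun hat :: "nat \<Rightarrow> letter list \<Rightarrow> letter list" where
  "hat n [] = []"
| "hat n [x] = [x]"
| "hat n (x # y # xs) =
     (if x = Bar n \<and> y = Unb n then Zero # Zero # hat n xs else x # hat n (y # xs))"

definition can_split_D :: "nat \<Rightarrow> letter list \<Rightarrow> bool" where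
  "can_split_D n C \<longleftrightarrow> column_D n C \<and> can_split_B n (hat n C)"

end

theory Submission imports Defs begin

fun num :: "letter \<Rightarrow> nat" where
  "num (Unb k) = k" | "num Zero = 0" | "num (Bar k) = k"

lemma colB_step:
  assumes "column_B n C" "Suc i < length C"
  shows "rankB n (C!i) \<le> rankB n (C!Suc i)"
    and "C!i \<noteq> Zero \<or> C!Suc i \<noteq> Zero \<Longrightarrow> rankB n (C!i) < rankB n (C!Suc i)"
  using assms unfolding column_B_def precB_def by auto

lemma colB_mono:
  assumes "column_B n C" "i \<le> j" "j < length C"
  shows "rankB n (C!i) \<le> rankB n (C!j)"
  using assms(2,3)
proof (induction j)
  case 0 then show ?case by simp
next
  case (Suc j)
  show ?case
  proof (cases "i = Suc j")
    case False
    then have "rankB n (C!i) \<le> rankB n (C!j)" using Suc by auto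
    also have "\<dots> \<le> rankB n (C!Suc j)" using colB_step(1)[OF assms(1)] Suc by auto
    finally show ?thesis .
  qed simp
qed

lemma colB_strict:
  assumes "column_B n C" "i < j" "j < length C" "C!i \<noteq> Zero \<or> C!j \<noteq> Zero"
  shows "rankB n (C!i) < rankB n (C!j)"
  using assms(4)
proof
  assume h: "C!i \<noteq> Zero"
  have "rankB n (C!i) < rankB n (C!Suc i)" using colB_step(2)[OF assms(1)] h assms by auto
  also have "\<dots> \<le> rankB n (C!j)" using colB_mono[OF assms(1)] assms by auto
  finally show ?thesis .
next
  assume h: "C!j \<noteq> Zero"
  obtain j' where j: "j = Suc j'" using assms(2) by (cases j) auto
  have "rankB n (C!i) \<le> rankB n (C!j')" using colB_mono[OF assms(1)] assms j by auto
  also have "\<dots> < rankB n (C!j)" using colB_step(2)[OF assms(1)] h assms j by auto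
  finally show ?thesis .
qed

lemma colB_letter: "column_B n C \<Longrightarrow> i < length C \<Longrightarrow> letterB n (C!i)"
  unfolding column_B_def by auto

lemma count_list_filter: "count_list xs x = length (filter (\<lambda>y. y = x) xs)"
  by (induction xs) auto

lemma hat_props:
  "length (hat n C) = length C \<and>
   (\<forall>p<length C. hat n C ! p = C ! p \<or> (hat n C ! p = Zero \<and> (C!p = Bar n \<or> C!p = Unb n)))"
proof (induction n C rule: hat.induct)
  case (3 n x y xs)
  show ?case
  proof (cases "x = Bar n \<and> y = Unb n")
    case True
    then show ?thesis using 3(1) by (auto simp: nth_Cons split: nat.split)
  next
    case False
    then show ?thesis using 3(2) by (auto simp: nth_Cons split: nat.split)
  qed
qed auto

lemma rank_inj: "letterB n x \<Longrightarrow> letterB n y \<Longrightarrow> rankB n x = rankB n y \<Longrightarrow> x = y"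
  by (cases x; cases y; auto)

lemma B_adm:
  assumes col: "column_B n C" and sp: "can_split_B n C"
  shows "admissible n C"
proof -
  define Z where "Z = I_C C"
  from sp obtain t where lt: "length t = length Z" and unb: "\<forall>i<length t. unbarred (t!i)"
    and dec: "\<forall>i. Suc i < length t \<longrightarrow> precB n (t!Suc i) (t!i)"
    and g0: "length Z > 0 \<longrightarrow> greatest_cand n C (Z!0) (t!0)"
    and gs: "\<forall>i. Suc i < length Z \<longrightarrow> greatest_cand n C (minB n (t!i) (Z!Suc i)) (t!Suc i)"
    unfolding can_split_B_def Z_def Let_def by blast
  define P where "P = {z. Unb z \<in> set C \<and> Bar z \<in> set C}"
  define N where "N = {k. 1 \<le> k \<and> k \<le> n \<and> Unb k \<notin> set C \<and> Bar k \<notin> set C}"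
  define r where "r = count_list C Zero"
  define l where "l = length C"
  have letC: "\<And>i. i < l \<Longrightarrow> letterB n (C!i)" using colB_letter[OF col] l_def by auto
  have Pfin: "finite P"
  proof -
    have "P \<subseteq> {1..n}"
    proof
      fix z assume "z \<in> P"
      then have "Unb z \<in> set C" unfolding P_def by auto
      then show "z \<in> {1..n}" using col unfolding column_B_def by fastforce
    qed
    then show ?thesis using finite_subset by blast
  qed
  have Nfin: "finite N" unfolding N_def by (rule finite_subset[of _ "{1..n}"]) auto
  have tc: "\<And>j. j < length t \<Longrightarrow> \<exists>b. cand n C b (t!j) \<and> rankB n (t!j) < rankB n (Z!j)"
  proof -
    fix j assume j: "j < length t"
    show "\<exists>b. cand n C b (t!j) \<and> rankB n (t!j) < rankB n (Z!j)"
    proof (cases j)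
      case 0
      then show ?thesis using g0 j lt unfolding greatest_cand_def cand_def precB_def by auto
    next
      case (Suc i)
      then have "greatest_cand n C (minB n (t!i) (Z!Suc i)) (t!Suc i)" using gs j lt by auto
      then show ?thesis using Suc unfolding greatest_cand_def cand_def precB_def minB_def
        by (auto split: if_splits)
    qed
  qed
  have tN: "\<And>j. j < length t \<Longrightarrow> t!j = Unb (num (t!j)) \<and> num (t!j) \<in> N"
  proof -
    fix j assume j: "j < length t"
    obtain k where k: "t!j = Unb k" using unb j unfolding unbarred_def by auto
    obtain b where "cand n C b (t!j)" using tc j by blast
    then show "t!j = Unb (num (t!j)) \<and> num (t!j) \<in> N" using k unfolding cand_def N_def by auto
  qed
  have tdec: "\<And>i j. i < j \<Longrightarrow> j < length t \<Longrightarrow> rankB n (t!j) < rankB n (t!i)"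
  proof -
    fix i j :: nat assume ij: "i < j" "j < length t"
    then show "rankB n (t!j) < rankB n (t!i)"
    proof (induction j)
      case 0 then show ?case by simp
    next
      case (Suc j)
      have s: "rankB n (t!Suc j) < rankB n (t!j)" using dec Suc(3) unfolding precB_def by auto
      show ?case
      proof (cases "i = j")
        case True then show ?thesis using s by simp
      next
        case False then show ?thesis using Suc s by auto
      qed
    qed
  qed
  have tinj: "\<And>i j. i < length t \<Longrightarrow> j < length t \<Longrightarrow> t!i = t!j \<Longrightarrow> i = j"
    by (metis linorder_neqE_nat tdec less_irrefl)
  define S where "S = rev (sorted_list_of_set P)"
  have Zeq: "Z = replicate r Zero @ map Unb S" unfolding Z_def I_C_def r_def S_def P_def by simp
  have Slen: "length S = card P" unfolding S_def by simp
  have Sset: "set S = P" unfolding S_def using Pfin by simp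
  have Ssort: "sorted_wrt (>) S" unfolding S_def sorted_wrt_rev
    using strict_sorted_list_of_set by simp
  have Zlen: "length Z = r + card P" using Zeq Slen by simp
  have Zmem: "\<And>w. w \<in> P \<Longrightarrow> \<exists>j<length Z. Z!j = Unb w"
  proof -
    fix w assume "w \<in> P"
    then obtain i where i: "i < length S" "S!i = w" using Sset by (metis in_set_conv_nth)
    show "\<exists>j<length Z. Z!j = Unb w"
      by (rule exI[of _ "r + i"]) (use i in \<open>simp add: Zeq nth_append\<close>)
  qed
  have Zsort: "\<And>i j a b. i < j \<Longrightarrow> j < length Z \<Longrightarrow> Z!i = Unb a \<Longrightarrow> Z!j = Unb b \<Longrightarrow> b < a"
  proof -
    fix i j a b assume h: "i < j" "j < length Z" "Z!i = Unb a" "Z!j = Unb b"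
    have ir: "i \<ge> r"
    proof (rule ccontr)
      assume "\<not> r \<le> i" then have "Z!i = Zero" using h by (simp add: Zeq nth_append)
      then show False using h by simp
    qed
    have "S!(i-r) = a" "S!(j-r) = b" using h ir by (simp_all add: Zeq nth_append)
    moreover have "S!(i-r) > S!(j-r)" using sorted_wrt_nth_less[OF Ssort] h ir Zeq by auto
    ultimately show "b < a" by simp
  qed
  have sN: "length Z \<le> card N"
  proof -
    have "inj_on (\<lambda>j. num (t!j)) {..<length t}"
      by (rule inj_onI) (metis lessThan_iff tN tinj)
    moreover have "(\<lambda>j. num (t!j)) ` {..<length t} \<subseteq> N" using tN by auto
    ultimately have "card {..<length t} \<le> card N" using card_inj_on_le Nfin by blast
    then show ?thesis using lt by simp
  qed

  define UA where "UA = {k. Unb k \<in> set C}"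
  define BA where "BA = {k. Bar k \<in> set C}"
  have UAs: "UA \<subseteq> {1..n}" unfolding UA_def using col unfolding column_B_def by fastforce
  have BAs: "BA \<subseteq> {1..n}" unfolding BA_def using col unfolding column_B_def by fastforce
  have Ns: "N \<subseteq> {1..n}" unfolding N_def by auto
  have UAf: "finite UA" using UAs finite_subset by blast
  have BAf: "finite BA" using BAs finite_subset by blast
  have PUB: "P = UA \<inter> BA" unfolding P_def UA_def BA_def by auto
  have Ndisj: "N \<inter> (UA \<union> BA) = {}" unfolding N_def UA_def BA_def by auto
  have lenb: "l \<le> n"
  proof -
    have "l = length (filter (\<lambda>y. y = Zero) C) + length (filter (\<lambda>y. \<not> y = Zero) C)"
      unfolding l_def by (rule sum_length_filter_compl[symmetric])
    also have "\<dots> = r + card {i. i < l \<and> C!i \<noteq> Zero}"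
      unfolding r_def count_list_filter l_def by (simp add: length_filter_conv_card)
    finally have L1: "l = r + card {i. i < l \<and> C!i \<noteq> Zero}" .
    have L2: "card {i. i < l \<and> C!i \<noteq> Zero} \<le> card (Unb ` UA \<union> Bar ` BA)"
    proof (rule card_inj_on_le)
      show "inj_on (\<lambda>i. C!i) {i. i < l \<and> C!i \<noteq> Zero}"
      proof (rule inj_onI)
        fix i j assume h: "i \<in> {i. i < l \<and> C!i \<noteq> Zero}" "j \<in> {i. i < l \<and> C!i \<noteq> Zero}" "C!i = C!j"
        show "i = j"
        proof (rule ccontr)
          assume "i \<noteq> j"
          then have "i < j \<or> j < i" by auto
          then show False
          proof
            assume "i < j"
            then have "rankB n (C!i) < rankB n (C!j)" by (rule colB_strict[OF col]) (use h l_def in auto)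
            then show False using h by simp
          next
            assume "j < i"
            then have "rankB n (C!j) < rankB n (C!i)" by (rule colB_strict[OF col]) (use h l_def in auto)
            then show False using h by simp
          qed
        qed
      qed
      show "(\<lambda>i. C!i) ` {i. i < l \<and> C!i \<noteq> Zero} \<subseteq> Unb ` UA \<union> Bar ` BA"
      proof
        fix x assume "x \<in> (\<lambda>i. C!i) ` {i. i < l \<and> C!i \<noteq> Zero}"
        then obtain i where i: "i < l" "C!i \<noteq> Zero" "x = C!i" by auto
        have xs: "x \<in> set C" and xz: "x \<noteq> Zero" using i l_def by auto
        show "x \<in> Unb ` UA \<union> Bar ` BA"
        proof (cases x)
          case (Unb k) then show ?thesis using xs unfolding UA_def by auto
        next
          case Zero then show ?thesis using xz by simp
        next
          case (Bar k) then show ?thesis using xs unfolding BA_def by auto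
        qed
      qed
      show "finite (Unb ` UA \<union> Bar ` BA)" using UAf BAf by simp
    qed
    have L3: "card (Unb ` UA \<union> Bar ` BA) \<le> card UA + card BA"
    proof -
      have "card (Unb ` UA \<union> Bar ` BA) \<le> card (Unb ` UA) + card (Bar ` BA)" by (rule card_Un_le)
      moreover have "card (Unb ` UA) = card UA" by (rule card_image) (simp add: inj_on_def)
      moreover have "card (Bar ` BA) = card BA" by (rule card_image) (simp add: inj_on_def)
      ultimately show ?thesis by simp
    qed
    have L4: "card UA + card BA = card (UA \<union> BA) + card P"
      using card_Un_Int[OF UAf BAf] PUB by simp
    have "l \<le> card N + card (UA \<union> BA)" using L1 L2 L3 L4 sN Zlen by linarith
    also have "\<dots> = card (N \<union> (UA \<union> BA))" using card_Un_disjoint[OF Nfin _ Ndisj] UAf BAf by simp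
    also have "\<dots> \<le> card {1..n}" by (rule card_mono) (use UAs BAs Ns in auto)
    finally show ?thesis by simp
  qed
  have pairs: "\<bar>int q - int p\<bar> \<ge> int l - int z + 1"
    if pq: "p < l" "q < l" "C!p = Unb z" "C!q = Bar z" for p q z
  proof -
    have "Unb z \<in> set C" using nth_mem[of p C] pq(1,3) l_def by simp
    moreover have "Bar z \<in> set C" using nth_mem[of q C] pq(2,4) l_def by simp
    ultimately have zP: "z \<in> P" unfolding P_def by simp
    have z1: "1 \<le> z" "z \<le> n" using letC[OF pq(1)] pq(3) by auto
    have "p < q"
    proof (rule ccontr)
      assume "\<not> p < q"
      then have "q < p" using pq by (cases "p = q") auto
      then have "rankB n (C!q) < rankB n (C!p)" using colB_strict[OF col, of q p] pq l_def by auto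
      then show False using pq z1 by simp
    qed
    define idx where "idx w = (SOME j. j < length Z \<and> Z!j = Unb w)" for w
    have idx: "idx w < length Z \<and> Z!(idx w) = Unb w" if "w \<in> P" for w
      unfolding idx_def using someI_ex[OF Zmem[OF that]] by blast
    have key: "card (P \<inter> {..<z}) + 1 \<le> card (N \<inter> {..<z})"
    proof -
      have eq: "P \<inter> {..z} = insert z (P \<inter> {..<z})" using zP by auto
      have "card (P \<inter> {..z}) \<le> card (N \<inter> {..<z})"
      proof (rule card_inj_on_le)
        show "inj_on (\<lambda>w. num (t!(idx w))) (P \<inter> {..z})"
        proof (rule inj_onI)
          fix w1 w2 assume h: "w1 \<in> P \<inter> {..z}" "w2 \<in> P \<inter> {..z}" "num (t!(idx w1)) = num (t!(idx w2))"
          have "t!(idx w1) = t!(idx w2)" using h tN idx lt by (metis IntD1)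
          then have "idx w1 = idx w2" using tinj idx lt h by (metis IntD1)
          then show "w1 = w2" using idx h by (metis IntD1 letter.inject(1))
        qed
        show "(\<lambda>w. num (t!(idx w))) ` (P \<inter> {..z}) \<subseteq> N \<inter> {..<z}"
        proof
          fix k assume "k \<in> (\<lambda>w. num (t!(idx w))) ` (P \<inter> {..z})"
          then obtain w where w: "w \<in> P" "w \<le> z" "k = num (t!(idx w))" by auto
          have ge: "idx z \<le> idx w"
          proof (rule ccontr)
            assume "\<not> idx z \<le> idx w"
            then have "idx w < idx z" by simp
            then have "z < w" using Zsort idx zP w by blast
            then show False using w by simp
          qed
          have iw: "idx w < length t" using idx w lt by simp
          have iz: "idx z < length t" using idx zP lt by simp
          have "rankB n (t!(idx w)) \<le> rankB n (t!(idx z))"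
            using tdec[OF _ iw] ge by (cases "idx z = idx w") (auto simp: less_imp_le)
          also have "\<dots> < rankB n (Z!(idx z))" using tc iz by blast
          also have "\<dots> = z" using idx zP by simp
          finally have "rankB n (t!(idx w)) < z" .
          moreover have "t!(idx w) = Unb k" "k \<in> N" using tN[OF iw] w by auto
          ultimately show "k \<in> N \<inter> {..<z}" by auto
        qed
        show "finite (N \<inter> {..<z})" using Nfin by simp
      qed
      moreover have "card (P \<inter> {..z}) = card (P \<inter> {..<z}) + 1"
        using eq Pfin by simp
      ultimately show ?thesis by simp
    qed
    define UAz where "UAz = UA \<inter> {..<z}"
    define BAz where "BAz = BA \<inter> {..<z}"
    have b1: "p \<le> card UAz"
    proof -
      have "card {..<p} \<le> card UAz"
      proof (rule card_inj_on_le)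
        have lt1: "\<And>i. i < p \<Longrightarrow> \<exists>k. C!i = Unb k \<and> k < z"
        proof -
          fix i assume i: "i < p"
          have "rankB n (C!i) < rankB n (C!p)" using colB_strict[OF col i] pq l_def by auto
          then show "\<exists>k. C!i = Unb k \<and> k < z" using pq z1 letC[of i] i by (cases "C!i") auto
        qed
        show "inj_on (\<lambda>i. num (C!i)) {..<p}"
        proof (rule inj_onI)
          fix i j assume h: "i \<in> {..<p}" "j \<in> {..<p}" "num (C!i) = num (C!j)"
          then have e: "C!i = C!j" using lt1 by (metis lessThan_iff num.simps(1))
          show "i = j"
          proof (rule ccontr)
            assume "i \<noteq> j"
            then have "i < j \<or> j < i" by auto
            then show False
            proof
              assume "i < j"
              moreover have "C!i \<noteq> Zero" using lt1 h by fastforce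
              ultimately have "rankB n (C!i) < rankB n (C!j)" using colB_strict[OF col, of i j] h pq l_def by auto
              then show False using e by simp
            next
              assume "j < i"
              moreover have "C!j \<noteq> Zero" using lt1 h by fastforce
              ultimately have "rankB n (C!j) < rankB n (C!i)" using colB_strict[OF col, of j i] h pq l_def by auto
              then show False using e by simp
            qed
          qed
        qed
        show "(\<lambda>i. num (C!i)) ` {..<p} \<subseteq> UAz"
        proof
          fix k assume "k \<in> (\<lambda>i. num (C!i)) ` {..<p}"
          then obtain i where i: "i < p" "k = num (C!i)" by auto
          then obtain k' where "C!i = Unb k'" "k' < z" using lt1 by blast
          moreover have "C!i \<in> set C" using i pq l_def by auto
          ultimately show "k \<in> UAz" using i unfolding UAz_def UA_def by auto
        qed
        show "finite UAz" using UAf UAz_def by simp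
      qed
      then show ?thesis by simp
    qed
    have b2: "l - 1 - q \<le> card BAz"
    proof -
      have "card {q<..<l} \<le> card BAz"
      proof (rule card_inj_on_le)
        have lt1: "\<And>i. q < i \<Longrightarrow> i < l \<Longrightarrow> \<exists>k. C!i = Bar k \<and> k < z"
        proof -
          fix i assume i: "q < i" "i < l"
          have "rankB n (C!q) < rankB n (C!i)" using colB_strict[OF col i(1)] pq i l_def by auto
          then show "\<exists>k. C!i = Bar k \<and> k < z" using pq z1 letC[of i] i by (cases "C!i") auto
        qed
        show "inj_on (\<lambda>i. num (C!i)) {q<..<l}"
        proof (rule inj_onI)
          fix i j assume h: "i \<in> {q<..<l}" "j \<in> {q<..<l}" "num (C!i) = num (C!j)"
          then have e: "C!i = C!j" using lt1 by (metis greaterThanLessThan_iff num.simps(3))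
          show "i = j"
          proof (rule ccontr)
            assume "i \<noteq> j"
            then have "i < j \<or> j < i" by auto
            then show False
            proof
              assume "i < j"
              moreover have "C!i \<noteq> Zero" using lt1 h by fastforce
              ultimately have "rankB n (C!i) < rankB n (C!j)" using colB_strict[OF col, of i j] h pq l_def by auto
              then show False using e by simp
            next
              assume "j < i"
              moreover have "C!j \<noteq> Zero" using lt1 h by fastforce
              ultimately have "rankB n (C!j) < rankB n (C!i)" using colB_strict[OF col, of j i] h pq l_def by auto
              then show False using e by simp
            qed
          qed
        qed
        show "(\<lambda>i. num (C!i)) ` {q<..<l} \<subseteq> BAz"
        proof
          fix k assume "k \<in> (\<lambda>i. num (C!i)) ` {q<..<l}"
          then obtain i where i: "q < i" "i < l" "k = num (C!i)" by auto
          then obtain k' where "C!i = Bar k'" "k' < z" using lt1 by blast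
          moreover have "C!i \<in> set C" using i pq l_def by auto
          ultimately show "k \<in> BAz" using i unfolding BAz_def BA_def by auto
        qed
        show "finite BAz" using BAf BAz_def by simp
      qed
      then show ?thesis by simp
    qed
    have c1: "card UAz + card BAz = card (UAz \<union> BAz) + card (P \<inter> {..<z})"
    proof -
      have "P \<inter> {..<z} = UAz \<inter> BAz" unfolding UAz_def BAz_def PUB by auto
      then show ?thesis using card_Un_Int[of UAz BAz] UAf BAf UAz_def BAz_def by simp
    qed
    have c2: "card (UAz \<union> BAz) + card (N \<inter> {..<z}) \<le> z - 1"
    proof -
      have "card (UAz \<union> BAz) + card (N \<inter> {..<z}) = card ((UAz \<union> BAz) \<union> (N \<inter> {..<z}))"
        by (rule card_Un_disjoint[symmetric]) (use UAf BAf Nfin Ndisj UAz_def BAz_def in auto)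
      also have "\<dots> \<le> card {1..<z}"
        by (rule card_mono) (use UAs BAs Ns UAz_def BAz_def in auto)
      finally show ?thesis by simp
    qed
    have "p + (l - 1 - q) + 2 \<le> z" using b1 b2 c1 c2 key z1 by linarith
    then show ?thesis using \<open>p < q\<close> pq by linarith
  qed
  show ?thesis unfolding admissible_def using lenb pairs l_def by blast
qed


theorem mainTheorem3:
  fixes n :: nat and C :: "letter list"
  assumes "n \<ge> 2"
    and "(column_B n C \<and> can_split_B n C) \<or> (column_D n C \<and> can_split_D n C)"
  shows "admissible n C"
  using assms(2)
proof
  assume "column_B n C \<and> can_split_B n C"
  then show ?thesis using B_adm by blast
next
  assume h: "column_D n C \<and> can_split_D n C"
  define H where "H = hat n C"
  have sp: "can_split_B n H" using h unfolding can_split_D_def H_def by simp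
  then have colH: "column_B n H" unfolding can_split_B_def by simp
  have aH: "admissible n H" by (rule B_adm[OF colH sp])
  have hp: "length H = length C"
    "\<And>p. p < length C \<Longrightarrow> H ! p = C ! p \<or> (H ! p = Zero \<and> (C!p = Bar n \<or> C!p = Unb n))"
    using hat_props[of n C] unfolding H_def by auto
  have len: "length C \<le> n" using aH hp unfolding admissible_def by simp
  show ?thesis unfolding admissible_def
  proof (intro conjI allI impI)
    show "length C \<le> n" by (rule len)
  next
    fix p q z assume pq: "p < length C" "q < length C" "C ! p = Unb z" "C ! q = Bar z"
    have "letterD n (C!p)" using h pq(1) unfolding column_D_def by auto
    then have z: "1 \<le> z" "z \<le> n" using pq(3) by auto
    have "p \<noteq> q" using pq by auto
    show "int (length C) - int z + 1 \<le> \<bar>int q - int p\<bar>"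
    proof (cases "z = n")
      case True
      then show ?thesis using len \<open>p \<noteq> q\<close> by linarith
    next
      case False
      have "H!p = Unb z" using hp(2)[OF pq(1)] pq(3) False by auto
      moreover have "H!q = Bar z" using hp(2)[OF pq(2)] pq(4) False by auto
      ultimately show ?thesis using aH pq hp(1) unfolding admissible_def by metis
    qed
  qed
qed

end
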